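(* Fix $D,\alpha,\theta>0$. Let $G=(V,E)$ be a finite connected graph on $n$ vertices satisfying (bal), (mix), (esc) with parameters $D,\alpha,\theta$, with $n$ sufficiently large (depending only on $D,\alpha,\theta$). Let $\chi>0$ and let $W\subseteq V$ be a nonempty vertex set with $\mathrm{Cap}_r(W)\ge\chi r/\sqrt n$. Then $$\mathcal B_W(G)\le\theta+2D+\frac{36D}{\chi^2}.$$
   Context: $d(v)$ is the degree of $v$, $\delta(G),\Delta(G)$ the minimum and maximum degrees. The lazy random walk $(X_t)$ on $G$ at each step stays put with probability $1/2$ and otherwise moves along a uniformly chosen edge incident to the current vertex; $\Pr_\mu$ denotes its law with $X_0\sim\mu$. Write $\mathbf p^t(u,v)=\Pr_u(X_t=v)$ and $\pi(v)=d(v)/(2|E|)$. The uniform mixing time is $t_{\mathrm{mix}}(G)=\min\{t\ge0:\max_{u,v\in V}|\mathbf p^t(u,v)/\pi(v)-1|\le 1/2\}$, and the bubble sum is $\mathcal B(G)=\sum_{t=0}^{t_{\mathrm{mix}}(G)}(t+1)\sup_{v}\mathbf p^t(v,v)$. Assumptions with parameters $D,\alpha,\theta>0$: (bal) $\Delta(G)/\delta(G)\le D$; (mix) $t_{\mathrm{mix}}(G)\le n^{1/2-\alpha}$; (esc) $\mathcal B(G)\le\theta$. The run time is $r=n^{1/2-\alpha/3}$ (rounded). For nonempty $U\subseteq V$, $\tau_U=\min\{t\ge0:X_t\in U\}$ and $\mathrm{Cap}_r(U)=\Pr_\pi(\tau_U<r)$. $\mathbf p_W^t(u,v)=\Pr(X_t=v\text{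 and }\{X_0,\dots,X_t\}\cap W=\varnothing\mid X_0=u)$ and the $W$-bubble sum is $\mathcal B_W(G)=\sum_{t=0}^\infty(t+1)\sup_{v\in V}\mathbf p_W^t(v,v)$. *)

theory Defs
  imports "HOL-Analysis.Analysis"
begin

definition simple_graph :: "'a set \<Rightarrow> ('a \<Rightarrow> 'a \<Rightarrow> bool) \<Rightarrow> bool" where
  "simple_graph V E \<longleftrightarrow> finite V \<and> V \<noteq> {} \<and>
     (\<forall>x y. E x y \<longrightarrow> x \<in> V \<and> y \<in> V) \<and>
     (\<forall>x y. E x y \<longrightarrow> E y x) \<and> (\<forall>x. \<not> E x x)"

definition connected_graph :: "'a set \<Rightarrow> ('a \<Rightarrow> 'a \<Rightarrow> bool) \<Rightarrow> bool" where
  "connected_graph V E \<longleftrightarrow> (\<forall>u\<in>V. \<forall>v\<in>V. E\<^sup>*\<^sup>* u v)"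

definition deg :: "'a set \<Rightarrow> ('a \<Rightarrow> 'a \<Rightarrow> bool) \<Rightarrow> 'a \<Rightarrow> nat" where
  "deg V E v = card {u \<in> V. E v u}"

definition max_deg :: "'a set \<Rightarrow> ('a \<Rightarrow> 'a \<Rightarrow> bool) \<Rightarrow> nat" where
  "max_deg V E = Max (deg V E ` V)"

definition min_deg :: "'a set \<Rightarrow> ('a \<Rightarrow> 'a \<Rightarrow> bool) \<Rightarrow> nat" where
  "min_deg V E = Min (deg V E ` V)"

definition trans :: "'a set \<Rightarrow> ('a \<Rightarrow> 'a \<Rightarrow> bool) \<Rightarrow> 'a \<Rightarrow> 'a \<Rightarrow> real" where
  "trans V E u v = (if u = v then 1/2 else 0) + (if E u v then 1 / (2 * real (deg V E u)) else 0)"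

fun pt :: "'a set \<Rightarrow> ('a \<Rightarrow> 'a \<Rightarrow> bool) \<Rightarrow> nat \<Rightarrow> 'a \<Rightarrow> 'a \<Rightarrow> real" where
  "pt V E 0 u v = (if u = v then 1 else 0)"
| "pt V E (Suc t) u v = (\<Sum>w\<in>V. pt V E t u w * trans V E w v)"

text \<open>Stationary distribution pi(v) = d(v)/(2|E|); note 2|E| is the sum of degrees.\<close>
definition stat :: "'a set \<Rightarrow> ('a \<Rightarrow> 'a \<Rightarrow> bool) \<Rightarrow> 'a \<Rightarrow> real" where
  "stat V E v = real (deg V E v) / real (\<Sum>w\<in>V. deg V E w)"

definition tmix :: "'a set \<Rightarrow> ('a \<Rightarrow> 'a \<Rightarrow> bool) \<Rightarrow> nat" where
  "tmix V E = (LEAST t. \<forall>u\<in>V. \<forall>v\<in>V. \<bar>pt V E t u v / stat V E v - 1\<bar> \<le> 1/2)"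

definition bubble :: "'a set \<Rightarrow> ('a \<Rightarrow> 'a \<Rightarrow> bool) \<Rightarrow> real" where
  "bubble V E = (\<Sum>t = 0..tmix V E. real (t + 1) * Max ((\<lambda>v. pt V E t v v) ` V))"

text \<open>Killed kernel p_W^t(u,v) = Pr_u(X_t = v and X_0,...,X_t all outside W).\<close>
fun pk :: "'a set \<Rightarrow> ('a \<Rightarrow> 'a \<Rightarrow> bool) \<Rightarrow> 'a set \<Rightarrow> nat \<Rightarrow> 'a \<Rightarrow> 'a \<Rightarrow> real" where
  "pk V E W 0 u v = (if u = v \<and> u \<notin> W then 1 else 0)"
| "pk V E W (Suc t) u v = (if v \<in> W then 0 else (\<Sum>w\<in>V. pk V E W t u w * trans V E w v))"

text \<open>Pr_u(tau_U < r) = 1 - Pr_u(X_0,...,X_{r-1} all outside U).\<close>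
definition hit_before :: "'a set \<Rightarrow> ('a \<Rightarrow> 'a \<Rightarrow> bool) \<Rightarrow> 'a set \<Rightarrow> nat \<Rightarrow> 'a \<Rightarrow> real" where
  "hit_before V E U r u = (if r = 0 then 0 else 1 - (\<Sum>v\<in>V. pk V E U (r - 1) u v))"

definition Cap :: "'a set \<Rightarrow> ('a \<Rightarrow> 'a \<Rightarrow> bool) \<Rightarrow> nat \<Rightarrow> 'a set \<Rightarrow> real" where
  "Cap V E r U = (\<Sum>u\<in>V. stat V E u * hit_before V E U r u)"

definition bubbleW :: "'a set \<Rightarrow> ('a \<Rightarrow> 'a \<Rightarrow> bool) \<Rightarrow> 'a set \<Rightarrow> ennreal" where
  "bubbleW V E W = (\<Sum>t. ennreal (real (t + 1) * Max ((\<lambda>v. pk V E W t v v) ` V)))"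

definition run_time :: "nat \<Rightarrow> real \<Rightarrow> nat" where
  "run_time n \<alpha> = nat (round (real n powr (1/2 - \<alpha>/3)))"

end

theory Submission
  imports Defs
begin



locale lg =
  fixes V :: "'a set" and E :: "'a \<Rightarrow> 'a \<Rightarrow> bool"
  assumes sg: "simple_graph V E" and conn: "connected_graph V E" and two: "2 \<le> card V"
begin

lemma finV: "finite V" using sg by (simp add: simple_graph_def)
lemma Ein: "E x y \<Longrightarrow> x \<in> V \<and> y \<in> V" using sg by (simp add: simple_graph_def)
lemma Esym: "E x y \<Longrightarrow> E y x" using sg by (simp add: simple_graph_def)
lemma Eirr: "\<not> E x x" using sg by (simp add: simple_graph_def)

lemma deg_pos: assumes v: "v \<in> V" shows "deg V E v > 0"
proof -
  have "\<exists>u\<in>V. u \<noteq> v"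
  proof (rule ccontr)
    assume "\<not> ?thesis" then have "V \<subseteq> {v}" by auto
    then have "card V \<le> 1" using card_mono[of "{v}" V] by simp
    then show False using two by simp
  qed
  then obtain u where u: "u \<in> V" "u \<noteq> v" by blast
  have "E\<^sup>*\<^sup>* v u" using conn u v by (simp add: connected_graph_def)
  then obtain w where "E v w" using u(2) by (metis converse_rtranclpE)
  then have "w \<in> {u \<in> V. E v u}" using Ein by auto
  moreover have "finite {u \<in> V. E v u}" using finV by simp
  ultimately show ?thesis unfolding deg_def using card_gt_0_iff by blast
qed

lemma trans_nonneg: "0 \<le> trans V E u v" by (simp add: trans_def)

lemma sum_trans: assumes u: "u \<in> V" shows "(\<Sum>v\<in>V. trans V E u v) = 1"
proof -
  have "(\<Sum>v\<in>V. trans V E u v) = (\<Sum>v\<in>V. (if u = v then 1/2 else 0)) + (\<Sum>v\<in>V. (if E u v then 1 / (2 * real (deg V E u)) else 0))"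
    unfolding trans_def by (simp add: sum.distrib)
  also have "(\<Sum>v\<in>V. (if u = v then 1/2 else 0::real)) = 1/2" using u finV by simp
  also have "(\<Sum>v\<in>V. (if E u v then 1 / (2 * real (deg V E u)) else 0)) = real (deg V E u) * (1 / (2 * real (deg V E u)))"
    by (simp add: sum.If_cases finV deg_def Collect_conj_eq Int_commute)
  also have "\<dots> = 1/2" using deg_pos[OF u] by simp
  finally show ?thesis by simp
qed

lemma trans_out: "w \<in> V \<Longrightarrow> v \<notin> V \<Longrightarrow> trans V E w v = 0"
  using Ein unfolding trans_def by auto

lemma pt_nonneg: "0 \<le> pt V E t u v"
  by (induction t arbitrary: v) (auto intro!: sum_nonneg mult_nonneg_nonneg trans_nonneg)

lemma pk_nonneg: "0 \<le> pk V E W t u v"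
  by (induction t arbitrary: v) (auto intro!: sum_nonneg mult_nonneg_nonneg trans_nonneg)

lemma pt_out: "u \<in> V \<Longrightarrow> v \<notin> V \<Longrightarrow> pt V E t u v = 0"
  by (cases t) (auto simp: trans_out)

lemma pk_out: "u \<in> V \<Longrightarrow> v \<notin> V \<Longrightarrow> pk V E W t u v = 0"
  by (cases t) (auto simp: trans_out)

lemma pk_W: "v \<in> W \<Longrightarrow> pk V E W t u v = 0"
  by (cases t) auto

lemma sum_pt: "u \<in> V \<Longrightarrow> (\<Sum>v\<in>V. pt V E t u v) = 1"
proof (induction t)
  case 0 then show ?case using finV by simp
next
  case (Suc t)
  have "(\<Sum>v\<in>V. pt V E (Suc t) u v) = (\<Sum>w\<in>V. pt V E t u w * (\<Sum>v\<in>V. trans V E w v))"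
    by (simp add: sum_distrib_left) (rule sum.swap)
  also have "\<dots> = (\<Sum>w\<in>V. pt V E t u w)" by (simp add: sum_trans)
  finally show ?case using Suc by simp
qed

lemma CK: "u \<in> V \<Longrightarrow> pt V E (a + b) u v = (\<Sum>w\<in>V. pt V E a u w * pt V E b w v)"
proof (induction b arbitrary: v)
  case 0
  have "(\<Sum>w\<in>V. pt V E a u w * pt V E 0 w v) = (\<Sum>w\<in>V. if w = v then pt V E a u v else 0)"
    by (rule sum.cong) simp_all
  also have "\<dots> = (if v \<in> V then pt V E a u v else 0)" using finV by simp
  also have "\<dots> = pt V E a u v" using pt_out[OF 0] by simp
  finally show ?case by simp
next
  case (Suc b)
  have "pt V E (a + Suc b) u v = (\<Sum>x\<in>V. pt V E (a + b) u x * trans V E x v)"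
    by simp
  also have "\<dots> = (\<Sum>x\<in>V. (\<Sum>w\<in>V. pt V E a u w * pt V E b w x) * trans V E x v)"
    using Suc by simp
  also have "\<dots> = (\<Sum>w\<in>V. pt V E a u w * (\<Sum>x\<in>V. pt V E b w x * trans V E x v))"
    by (simp add: sum_distrib_left sum_distrib_right mult.assoc) (rule sum.swap)
  finally show ?case by (simp only: pt.simps(2))
qed

lemma pk_markov: "u \<in> V \<Longrightarrow> pk V E W (a + b) u v = (\<Sum>w\<in>V. pk V E W a u w * pk V E W b w v)"
proof (induction b arbitrary: v)
  case 0
  have "(\<Sum>w\<in>V. pk V E W a u w * pk V E W 0 w v) = (\<Sum>w\<in>V. if w = v then (if v \<in> W then 0 else pk V E W a u v) else 0)"
    by (rule sum.cong) simp_all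
  also have "\<dots> = (if v \<in> V then (if v \<in> W then 0 else pk V E W a u v) else 0)" using finV by simp
  also have "\<dots> = pk V E W a u v" using pk_out[OF 0] pk_W by simp
  finally show ?case by simp
next
  case (Suc b)
  show ?case
  proof (cases "v \<in> W")
    case True then show ?thesis by simp
  next
    case False
    have "pk V E W (a + Suc b) u v = (\<Sum>x\<in>V. pk V E W (a + b) u x * trans V E x v)"
      using False by simp
    also have "\<dots> = (\<Sum>x\<in>V. (\<Sum>w\<in>V. pk V E W a u w * pk V E W b w x) * trans V E x v)"
      using Suc by simp
    also have "\<dots> = (\<Sum>w\<in>V. pk V E W a u w * (\<Sum>x\<in>V. pk V E W b w x * trans V E x v))"
      by (simp add: sum_distrib_left sum_distrib_right mult.assoc) (rule sum.swap)
    finally show ?thesis by (simp only: pk.simps(2) False if_False)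
  qed
qed

lemma pk_le_pt: "pk V E W t u v \<le> pt V E t u v"
  by (induction t arbitrary: v) (auto intro!: sum_mono mult_right_mono trans_nonneg sum_nonneg mult_nonneg_nonneg pt_nonneg)

definition A where "A W k u = (\<Sum>v\<in>V. pk V E W k u v)"

lemma A_nonneg: "0 \<le> A W k u" unfolding A_def by (auto intro!: sum_nonneg pk_nonneg)

lemma A_Suc: assumes u: "u \<in> V" shows "A W (Suc k) u \<le> A W k u"
proof -
  have "A W (Suc k) u \<le> (\<Sum>v\<in>V. \<Sum>w\<in>V. pk V E W k u w * trans V E w v)"
    unfolding A_def by (auto intro!: sum_mono sum_nonneg mult_nonneg_nonneg pk_nonneg trans_nonneg)
  also have "\<dots> = (\<Sum>w\<in>V. pk V E W k u w * (\<Sum>v\<in>V. trans V E w v))"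
    by (simp add: sum_distrib_left) (rule sum.swap)
  also have "\<dots> = A W k u" by (simp add: sum_trans A_def)
  finally show ?thesis .
qed

lemma A_mono: "u \<in> V \<Longrightarrow> k \<le> l \<Longrightarrow> A W l u \<le> A W k u"
proof (induction l)
  case 0 then show ?case by simp
next
  case (Suc l) then show ?case using A_Suc[of u W l] by (cases "k = Suc l") auto
qed

lemma A_le1: "u \<in> V \<Longrightarrow> A W k u \<le> 1"
proof -
  assume u: "u \<in> V"
  have "A W 0 u \<le> 1" unfolding A_def using finV u by (cases "u \<in> W") auto
  then show ?thesis using A_mono[OF u, of 0 k W] by simp
qed

lemma A_add: "u \<in> V \<Longrightarrow> A W (a + b) u = (\<Sum>w\<in>V. pk V E W a u w * A W b w)"
  unfolding A_def by (simp add: pk_markov sum_distrib_left) (rule sum.swap)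

end



context lg begin

lemma V_ne: "V \<noteq> {}" using two by auto

lemma S_pos_n: "0 < (\<Sum>w\<in>V. deg V E w)"
proof -
  obtain v where v: "v \<in> V" using V_ne by blast
  have "deg V E v \<le> (\<Sum>w\<in>V. deg V E w)" using member_le_sum[of v V "deg V E"] finV v by simp
  then show ?thesis using deg_pos[OF v] by simp
qed

lemma S_pos: "0 < real (\<Sum>w\<in>V. deg V E w)" using S_pos_n by (simp only: of_nat_0_less_iff)
lemma S_pos_r: "0 < (\<Sum>x\<in>V. real (deg V E x))" using S_pos by (simp only: of_nat_sum)

lemma stat_pos: "v \<in> V \<Longrightarrow> 0 < stat V E v"
  unfolding stat_def using S_pos_r deg_pos by simp

lemma stat_nonneg: "0 \<le> stat V E v"
  unfolding stat_def by (auto intro!: divide_nonneg_nonneg sum_nonneg)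

lemma sum_stat: "(\<Sum>v\<in>V. stat V E v) = 1"
  unfolding stat_def using S_pos by (simp add: sum_divide_distrib[symmetric])

lemma stat_trans: assumes v: "v \<in> V" shows "(\<Sum>w\<in>V. stat V E w * trans V E w v) = stat V E v"
proof -
  define S where "S = real (\<Sum>w\<in>V. deg V E w)"
  have Sp: "S > 0" using S_pos S_def by simp
  have "(\<Sum>w\<in>V. stat V E w * trans V E w v) =
        (\<Sum>w\<in>V. (if w = v then stat V E v / 2 else 0)) + (\<Sum>w\<in>V. (if E w v then 1 / (2 * S) else 0))"
    unfolding sum.distrib[symmetric]
  proof (rule sum.cong)
    fix w assume w: "w \<in> V"
    have d: "real (deg V E w) > 0" using deg_pos[OF w] by simp
    show "stat V E w * trans V E w v = (if w = v then stat V E v / 2 else 0) + (if E w v then 1 / (2 * S) else 0)"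
      unfolding trans_def stat_def S_def[symmetric] using d Sp by (auto simp: field_simps)
  qed simp
  also have "(\<Sum>w\<in>V. (if w = v then stat V E v / 2 else 0)) = stat V E v / 2" using v finV by simp
  also have "(\<Sum>w\<in>V. (if E w v then 1 / (2 * S) else 0)) = real (card {w\<in>V. E w v}) / (2 * S)"
    by (simp add: sum.If_cases finV Collect_conj_eq Int_commute)
  also have "{w\<in>V. E w v} = {w\<in>V. E v w}" using Esym by blast
  also have "real (card {w\<in>V. E v w}) / (2 * S) = stat V E v / 2"
    unfolding stat_def S_def deg_def by simp
  finally show ?thesis by simp
qed

lemma stat_pt: "v \<in> V \<Longrightarrow> (\<Sum>u\<in>V. stat V E u * pt V E t u v) = stat V E v"
proof (induction t arbitrary: v)
  case 0
  have "(\<Sum>u\<in>V. stat V E u * pt V E 0 u v) = (\<Sum>u\<in>V. if u = v then stat V E v else 0)"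
    by (rule sum.cong) auto
  then show ?case using 0 finV by simp
next
  case (Suc t)
  have "(\<Sum>u\<in>V. stat V E u * pt V E (Suc t) u v) = (\<Sum>u\<in>V. \<Sum>w\<in>V. stat V E u * pt V E t u w * trans V E w v)"
    by (simp add: sum_distrib_left mult.assoc)
  also have "\<dots> = (\<Sum>w\<in>V. \<Sum>u\<in>V. stat V E u * pt V E t u w * trans V E w v)" by (rule sum.swap)
  also have "\<dots> = (\<Sum>w\<in>V. (\<Sum>u\<in>V. stat V E u * pt V E t u w) * trans V E w v)"
    by (simp add: sum_distrib_right)
  also have "\<dots> = (\<Sum>w\<in>V. stat V E w * trans V E w v)" using Suc.IH by simp
  finally show ?case using stat_trans[OF Suc.prems] by simp
qed

lemma trans_edge: "E y z \<Longrightarrow> trans V E y z > 0"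
proof -
  assume e: "E y z"
  have "y \<noteq> z" using e Eirr by blast
  moreover have "real (deg V E y) > 0" using deg_pos Ein e by simp
  ultimately show ?thesis unfolding trans_def using e by simp
qed

lemma pt_single: "w \<in> V \<Longrightarrow> pt V E t u w * trans V E w v \<le> pt V E (Suc t) u v"
  using member_le_sum[of w V "\<lambda>w. pt V E t u w * trans V E w v"] finV
  by (simp add: mult_nonneg_nonneg pt_nonneg trans_nonneg)

lemma pt_lazy: "v \<in> V \<Longrightarrow> pt V E t u v / 2 \<le> pt V E (Suc t) u v"
  using pt_single[of v t u v] Eirr by (simp add: trans_def)

lemma pt_pos_mono: "v \<in> V \<Longrightarrow> 0 < pt V E t u v \<Longrightarrow> 0 < pt V E (t + j) u v"
proof (induction j)
  case 0 then show ?case by simp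
next
  case (Suc j) then show ?case using pt_lazy[of v "t + j" u] by simp
qed

lemma reach: "E\<^sup>*\<^sup>* u v \<Longrightarrow> \<exists>l. 0 < pt V E l u v"
proof (induction rule: rtranclp.induct)
  case (rtrancl_refl a) show ?case by (rule exI[of _ 0]) simp
next
  case (rtrancl_into_rtrancl a b c)
  then obtain l where l: "0 < pt V E l a b" by blast
  have "0 < pt V E l a b * trans V E b c" using l trans_edge[OF rtrancl_into_rtrancl(2)] by simp
  also have "\<dots> \<le> pt V E (Suc l) a c" using pt_single Ein rtrancl_into_rtrancl(2) by blast
  finally show ?case by blast
qed

lemma unif_pos: "\<exists>m. \<forall>u\<in>V. \<forall>v\<in>V. 0 < pt V E m u v"
proof -
  define L where "L = (\<lambda>(u,v). SOME l. 0 < pt V E l u v)"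
  have L: "0 < pt V E (L (u,v)) u v" if "u \<in> V" "v \<in> V" for u v
  proof -
    have "\<exists>l. 0 < pt V E l u v" using reach conn that by (simp add: connected_graph_def)
    then have "0 < pt V E (SOME l. 0 < pt V E l u v) u v" by (rule someI_ex)
    then show ?thesis unfolding L_def by simp
  qed
  define m where "m = Max (L ` (V \<times> V))"
  have "0 < pt V E m u v" if "u \<in> V" "v \<in> V" for u v
  proof -
    have "L (u,v) \<le> m" unfolding m_def using that finV by simp
    then have "m = L (u,v) + (m - L (u,v))" by simp
    then show ?thesis using pt_pos_mono[OF that(2) L[OF that]] by metis
  qed
  then show ?thesis by blast
qed

end



context lg begin

lemma contraction:
  assumes m: "\<And>u w. u \<in> V \<Longrightarrow> w \<in> V \<Longrightarrow> \<epsilon> \<le> pt V E m u w" and ep: "0 \<le> \<epsilon>"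
    and v: "v \<in> V"
  shows "\<forall>u\<in>V. \<forall>u'\<in>V. pt V E (j*m) u v - pt V E (j*m) u' v \<le> (1 - real (card V) * \<epsilon>)^j"
proof (induction j)
  case 0 then show ?case by (auto simp: pt_nonneg)
next
  case (Suc j)
  define g where "g w = pt V E (j*m) w v" for w
  define c where "c = 1 - real (card V) * \<epsilon>"
  obtain u0 where u0: "u0 \<in> V" using V_ne by blast
  have "real (card V) * \<epsilon> = (\<Sum>w\<in>V. \<epsilon>)" by simp
  also have "\<dots> \<le> (\<Sum>w\<in>V. pt V E m u0 w)" by (rule sum_mono) (use m u0 in auto)
  also have "\<dots> = 1" using sum_pt u0 by simp
  finally have c0: "0 \<le> c" unfolding c_def by simp
  define Mx where "Mx = Max (g ` V)"
  define Mn where "Mn = Min (g ` V)"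
  have gMx: "g w \<le> Mx" if "w \<in> V" for w unfolding Mx_def using finV that by simp
  have gMn: "Mn \<le> g w" if "w \<in> V" for w unfolding Mn_def using finV that by simp
  have "Mx \<in> g ` V" unfolding Mx_def using finV V_ne by simp
  then obtain w1 where w1: "w1 \<in> V" "Mx = g w1" by blast
  have "Mn \<in> g ` V" unfolding Mn_def using finV V_ne by simp
  then obtain w2 where w2: "w2 \<in> V" "Mn = g w2" by blast
  have diff: "Mx - Mn \<le> c^j" using Suc w1 w2 unfolding g_def c_def by simp
  have split: "pt V E (Suc j * m) u v = (\<Sum>w\<in>V. (pt V E m u w - \<epsilon>) * g w) + \<epsilon> * (\<Sum>w\<in>V. g w)"
    if u: "u \<in> V" for u
  proof -
    have "pt V E (Suc j * m) u v = pt V E (m + j * m) u v" by simp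
    also have "\<dots> = (\<Sum>w\<in>V. pt V E m u w * g w)" using CK[OF u] unfolding g_def by simp
    also have "\<dots> = (\<Sum>w\<in>V. (pt V E m u w - \<epsilon>) * g w + \<epsilon> * g w)"
      by (rule sum.cong) (auto simp: algebra_simps)
    finally show ?thesis by (simp add: sum.distrib sum_distrib_left)
  qed
  have up: "(\<Sum>w\<in>V. (pt V E m u w - \<epsilon>) * g w) \<le> c * Mx" if u: "u \<in> V" for u
  proof -
    have "(\<Sum>w\<in>V. (pt V E m u w - \<epsilon>) * g w) \<le> (\<Sum>w\<in>V. (pt V E m u w - \<epsilon>) * Mx)"
      by (rule sum_mono) (use m u gMx in \<open>auto intro!: mult_left_mono\<close>)
    also have "\<dots> = (\<Sum>w\<in>V. (pt V E m u w - \<epsilon>)) * Mx"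
      by (rule sum_distrib_right[symmetric])
    also have "\<dots> = ((\<Sum>w\<in>V. pt V E m u w) - real (card V) * \<epsilon>) * Mx"
      by (simp add: sum_subtractf)
    finally show ?thesis using sum_pt[OF u] unfolding c_def by simp
  qed
  have lo: "c * Mn \<le> (\<Sum>w\<in>V. (pt V E m u w - \<epsilon>) * g w)" if u: "u \<in> V" for u
  proof -
    have "(\<Sum>w\<in>V. (pt V E m u w - \<epsilon>) * Mn) \<le> (\<Sum>w\<in>V. (pt V E m u w - \<epsilon>) * g w)"
      by (rule sum_mono) (use m u gMn in \<open>auto intro!: mult_left_mono\<close>)
    moreover have "(\<Sum>w\<in>V. (pt V E m u w - \<epsilon>) * Mn) = (\<Sum>w\<in>V. (pt V E m u w - \<epsilon>)) * Mn"
      by (rule sum_distrib_right[symmetric])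
    moreover have "(\<Sum>w\<in>V. (pt V E m u w - \<epsilon>)) = (\<Sum>w\<in>V. pt V E m u w) - real (card V) * \<epsilon>"
      by (simp add: sum_subtractf)
    ultimately show ?thesis using sum_pt[OF u] unfolding c_def by simp
  qed
  show ?case
  proof (intro ballI)
    fix u u' assume u: "u \<in> V" and u': "u' \<in> V"
    have "pt V E (Suc j * m) u v - pt V E (Suc j * m) u' v \<le> c * Mx - c * Mn"
      using split[OF u] split[OF u'] up[OF u] lo[OF u'] by simp
    also have "\<dots> = c * (Mx - Mn)" by (simp add: algebra_simps)
    also have "\<dots> \<le> c * c^j" using diff c0 by (simp add: mult_left_mono)
    finally show "pt V E (Suc j * m) u v - pt V E (Suc j * m) u' v \<le> (1 - real (card V) * \<epsilon>) ^ Suc j"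
      unfolding c_def by simp
  qed
qed

lemma close_stat:
  assumes v: "v \<in> V" and u: "u \<in> V"
    and d: "\<forall>u\<in>V. \<forall>u'\<in>V. pt V E t u v - pt V E t u' v \<le> \<delta>"
  shows "\<bar>pt V E t u v - stat V E v\<bar> \<le> \<delta>"
proof -
  have eq: "stat V E v - pt V E t u v = (\<Sum>u'\<in>V. stat V E u' * (pt V E t u' v - pt V E t u v))"
    using stat_pt[OF v, of t] sum_stat by (simp add: algebra_simps sum_subtractf sum_distrib_right[symmetric])
  have "(\<Sum>u'\<in>V. stat V E u' * (pt V E t u' v - pt V E t u v)) \<le> (\<Sum>u'\<in>V. stat V E u' * \<delta>)"
    by (rule sum_mono) (use d u in \<open>auto intro!: mult_left_mono stat_nonneg\<close>)
  moreover have "(\<Sum>u'\<in>V. stat V E u' * (- \<delta>)) \<le> (\<Sum>u'\<in>V. stat V E u' * (pt V E t u' v - pt V E t u v))"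
  proof (rule sum_mono)
    fix u' assume u': "u' \<in> V"
    then have "- \<delta> \<le> pt V E t u' v - pt V E t u v" using d u by force
    then show "stat V E u' * (- \<delta>) \<le> stat V E u' * (pt V E t u' v - pt V E t u v)"
      by (rule mult_left_mono) (rule stat_nonneg)
  qed
  moreover have "(\<Sum>u'\<in>V. stat V E u' * \<delta>) = \<delta>" using sum_stat by (simp add: sum_distrib_right[symmetric])
  moreover have "(\<Sum>u'\<in>V. stat V E u' * (- \<delta>)) = - \<delta>" using sum_stat by (simp add: sum_negf sum_distrib_right[symmetric])
  ultimately show ?thesis using eq by linarith
qed

lemma mix_exists: "\<exists>t. \<forall>u\<in>V. \<forall>v\<in>V. \<bar>pt V E t u v / stat V E v - 1\<bar> \<le> 1/2"
proof -
  obtain m where m: "\<forall>u\<in>V. \<forall>v\<in>V. 0 < pt V E m u v" using unif_pos by blast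
  define \<epsilon> where "\<epsilon> = Min ((\<lambda>(u,v). pt V E m u v) ` (V \<times> V))"
  have fin: "finite (V \<times> V)" using finV by simp
  have ne: "V \<times> V \<noteq> {}" using V_ne by simp
  have epos: "0 < \<epsilon>" unfolding \<epsilon>_def using fin ne m by (auto simp: Min_gr_iff)
  have ele: "\<epsilon> \<le> pt V E m u w" if "u \<in> V" "w \<in> V" for u w
    unfolding \<epsilon>_def using fin that by (intro Min_le) auto
  define pmin where "pmin = Min (stat V E ` V)"
  have pmin: "0 < pmin" unfolding pmin_def using finV V_ne stat_pos by (auto simp: Min_gr_iff)
  have pminle: "pmin \<le> stat V E v" if "v \<in> V" for v unfolding pmin_def using finV that by simp
  have "1 - real (card V) * \<epsilon> < 1" using epos two by simp
  then obtain j where j: "(1 - real (card V) * \<epsilon>)^j < pmin / 2" using real_arch_pow_inv pmin by (metis half_gt_zero)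
  have "\<forall>u\<in>V. \<forall>v\<in>V. \<bar>pt V E (j*m) u v / stat V E v - 1\<bar> \<le> 1/2"
  proof (intro ballI)
    fix u v assume u: "u \<in> V" and v: "v \<in> V"
    have "\<bar>pt V E (j*m) u v - stat V E v\<bar> \<le> (1 - real (card V) * \<epsilon>)^j"
      using close_stat[OF v u contraction[OF ele _ v]] epos u v by simp
    also have "\<dots> \<le> stat V E v / 2" using j pminle[OF v] by simp
    finally have h: "\<bar>pt V E (j*m) u v - stat V E v\<bar> \<le> stat V E v / 2" .
    have sp: "0 < stat V E v" using stat_pos v by simp
    have "pt V E (j*m) u v / stat V E v - 1 = (pt V E (j*m) u v - stat V E v) / stat V E v"
      using sp by (simp add: field_simps)
    then have "\<bar>pt V E (j*m) u v / stat V E v - 1\<bar> = \<bar>pt V E (j*m) u v - stat V E v\<bar> / stat V E v"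
      using sp by simp
    also have "\<dots> \<le> (stat V E v / 2) / stat V E v" using h sp by (simp add: divide_right_mono)
    also have "\<dots> = 1/2" using sp by simp
    finally show "\<bar>pt V E (j*m) u v / stat V E v - 1\<bar> \<le> 1/2" .
  qed
  then show ?thesis by blast
qed

lemma tmix_prop: "u \<in> V \<Longrightarrow> v \<in> V \<Longrightarrow> \<bar>pt V E (tmix V E) u v / stat V E v - 1\<bar> \<le> 1/2"
  using LeastI_ex[OF mix_exists] unfolding tmix_def by blast

lemma tmix_lower: "u \<in> V \<Longrightarrow> v \<in> V \<Longrightarrow> stat V E v / 2 \<le> pt V E (tmix V E) u v"
proof -
  assume u: "u \<in> V" and v: "v \<in> V"
  have sp: "0 < stat V E v" using stat_pos v by simp
  have "\<bar>pt V E (tmix V E) u v / stat V E v - 1\<bar> \<le> 1/2" using tmix_prop u v by blast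
  then have "1/2 \<le> pt V E (tmix V E) u v / stat V E v" by linarith
  then show ?thesis using sp by (simp add: field_simps)
qed

lemma tmix_upper: "u \<in> V \<Longrightarrow> v \<in> V \<Longrightarrow> pt V E (tmix V E) u v \<le> 3/2 * stat V E v"
proof -
  assume u: "u \<in> V" and v: "v \<in> V"
  have sp: "0 < stat V E v" using stat_pos v by simp
  have "\<bar>pt V E (tmix V E) u v / stat V E v - 1\<bar> \<le> 1/2" using tmix_prop u v by blast
  then have "pt V E (tmix V E) u v / stat V E v \<le> 3/2" by linarith
  then show ?thesis using sp by (simp add: field_simps)
qed

lemma tmix_pos: "0 < tmix V E"
proof (rule ccontr)
  assume "\<not> 0 < tmix V E"
  then have t0: "tmix V E = 0" by simp
  obtain v where v: "v \<in> V" using V_ne by blast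
  have "\<exists>u\<in>V. u \<noteq> v"
  proof (rule ccontr)
    assume "\<not> ?thesis" then have "V \<subseteq> {v}" by auto
    then have "card V \<le> 1" using card_mono[of "{v}" V] by simp
    then show False using two by simp
  qed
  then obtain u where u: "u \<in> V" "u \<noteq> v" by blast
  have "\<bar>pt V E 0 u v / stat V E v - 1\<bar> \<le> 1/2" using tmix_prop[OF u(1) v] t0 by simp
  then show False using u by simp
qed

end



context lg begin

lemma hit_A: "0 < r \<Longrightarrow> hit_before V E W r u = 1 - A W (r - 1) u"
  unfolding hit_before_def A_def by simp

lemma block1:
  assumes u: "u \<in> V" and r: "0 < r"
  shows "A W (tmix V E + (r - 1)) u \<le> 1 - Cap V E r W / 2"
proof -
  let ?T = "tmix V E"
  let ?a = "\<lambda>w. A W (r - 1) w"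
  have "A W (?T + (r - 1)) u = (\<Sum>w\<in>V. pk V E W ?T u w * ?a w)" by (rule A_add[OF u])
  also have "\<dots> \<le> (\<Sum>w\<in>V. pt V E ?T u w * ?a w)"
    by (rule sum_mono) (auto intro!: mult_right_mono pk_le_pt A_nonneg)
  also have "\<dots> = (\<Sum>w\<in>V. pt V E ?T u w) - (\<Sum>w\<in>V. pt V E ?T u w * (1 - ?a w))"
    by (simp add: algebra_simps sum_subtractf)
  also have "\<dots> = 1 - (\<Sum>w\<in>V. pt V E ?T u w * (1 - ?a w))" using sum_pt[OF u] by simp
  also have "\<dots> \<le> 1 - (\<Sum>w\<in>V. (stat V E w / 2) * (1 - ?a w))"
  proof -
    have "(\<Sum>w\<in>V. (stat V E w / 2) * (1 - ?a w)) \<le> (\<Sum>w\<in>V. pt V E ?T u w * (1 - ?a w))"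
    proof (rule sum_mono)
      fix w assume w: "w \<in> V"
      have "stat V E w / 2 \<le> pt V E ?T u w" by (rule tmix_lower[OF u w])
      moreover have "0 \<le> 1 - ?a w" using A_le1[OF w] by simp
      ultimately show "(stat V E w / 2) * (1 - ?a w) \<le> pt V E ?T u w * (1 - ?a w)" by (rule mult_right_mono)
    qed
    then show ?thesis by simp
  qed
  also have "(\<Sum>w\<in>V. (stat V E w / 2) * (1 - ?a w)) = Cap V E r W / 2"
    unfolding Cap_def using hit_A[OF r] by (simp add: sum_divide_distrib)
  finally show ?thesis by simp
qed

definition rho where "rho W r = 1 - Cap V E r W / 2"

lemma rho_nonneg: "0 < r \<Longrightarrow> 0 \<le> rho W r"
proof -
  assume r: "0 < r"
  obtain u where u: "u \<in> V" using V_ne by blast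
  show ?thesis using block1[OF u r, of W] A_nonneg[of W "tmix V E + (r - 1)" u] unfolding rho_def by linarith
qed

lemma decay_blocks:
  assumes r: "0 < r" and u: "u \<in> V"
  shows "A W (j * (tmix V E + r)) u \<le> rho W r ^ j"
  using u
proof (induction j arbitrary: u)
  case 0 then show ?case using A_le1 by simp
next
  case (Suc j)
  let ?B = "tmix V E + r"
  have "A W (Suc j * ?B) u \<le> A W (j * ?B + (tmix V E + (r - 1))) u"
    by (rule A_mono[OF Suc.prems]) (use r in simp)
  also have "\<dots> = (\<Sum>w\<in>V. pk V E W (j * ?B) u w * A W (tmix V E + (r - 1)) w)"
    by (rule A_add[OF Suc.prems])
  also have "\<dots> \<le> (\<Sum>w\<in>V. pk V E W (j * ?B) u w * rho W r)"
    by (rule sum_mono) (use block1 r in \<open>auto intro!: mult_left_mono pk_nonneg simp: rho_def\<close>)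
  also have "\<dots> = A W (j * ?B) u * rho W r" unfolding A_def by (simp add: sum_distrib_right)
  also have "\<dots> \<le> rho W r ^ j * rho W r"
    by (rule mult_right_mono) (use Suc rho_nonneg[OF r] in auto)
  finally show ?case by (simp add: mult.commute)
qed

lemma decay:
  assumes r: "0 < r" and u: "u \<in> V"
  shows "A W k u \<le> rho W r ^ (k div (tmix V E + r))"
proof -
  let ?B = "tmix V E + r"
  have "(k div ?B) * ?B \<le> k" by (metis div_mult_mod_eq le_add1)
  then have "A W k u \<le> A W ((k div ?B) * ?B) u" by (rule A_mono[OF u])
  also have "\<dots> \<le> rho W r ^ (k div ?B)" by (rule decay_blocks[OF r u])
  finally show ?thesis .
qed

lemma diag_bound:
  assumes v: "v \<in> V"
  shows "pk V E W (k + tmix V E) v v \<le> 3/2 * stat V E v * A W k v"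
proof -
  have "pk V E W (k + tmix V E) v v = (\<Sum>w\<in>V. pk V E W k v w * pk V E W (tmix V E) w v)"
    by (rule pk_markov[OF v])
  also have "\<dots> \<le> (\<Sum>w\<in>V. pk V E W k v w * (3/2 * stat V E v))"
  proof (rule sum_mono)
    fix w assume w: "w \<in> V"
    have "pk V E W (tmix V E) w v \<le> 3/2 * stat V E v" using pk_le_pt tmix_upper[OF w v] order_trans by blast
    then show "pk V E W k v w * pk V E W (tmix V E) w v \<le> pk V E W k v w * (3/2 * stat V E v)"
      by (rule mult_left_mono) (rule pk_nonneg)
  qed
  also have "\<dots> = (\<Sum>w\<in>V. pk V E W k v w) * (3/2 * stat V E v)" by (rule sum_distrib_right[symmetric])
  also have "\<dots> = 3/2 * stat V E v * A W k v" unfolding A_def by simp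
  finally show ?thesis .
qed

lemma stat_le:
  assumes D: "real (max_deg V E) / real (min_deg V E) \<le> D" and v: "v \<in> V"
  shows "stat V E v \<le> D / real (card V)"
proof -
  have mn: "min_deg V E \<in> deg V E ` V" unfolding min_deg_def using finV V_ne by simp
  then have mpos: "0 < real (min_deg V E)" using deg_pos by auto
  have dv: "real (deg V E v) \<le> real (max_deg V E)" unfolding max_deg_def using finV v by simp
  have "real (card V) * real (min_deg V E) = (\<Sum>w\<in>V. real (min_deg V E))" by simp
  also have "\<dots> \<le> (\<Sum>w\<in>V. real (deg V E w))"
    by (rule sum_mono) (simp add: min_deg_def finV)
  finally have S: "real (card V) * real (min_deg V E) \<le> (\<Sum>w\<in>V. real (deg V E w))" .
  have n: "0 < real (card V)" using two by simp
  have "stat V E v = real (deg V E v) / (\<Sum>w\<in>V. real (deg V E w))" unfolding stat_def by simp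
  also have "\<dots> \<le> real (max_deg V E) / (real (card V) * real (min_deg V E))"
    using dv S n mpos by (intro frac_le) auto
  also have "\<dots> = (real (max_deg V E) / real (min_deg V E)) / real (card V)" by simp
  also have "\<dots> \<le> D / real (card V)" by (rule divide_right_mono[OF D]) (use n in simp)
  finally show ?thesis .
qed

end



lemma geo1: fixes \<rho> :: real assumes "0 \<le> \<rho>" "\<rho> < 1" shows "(\<Sum>j<J. \<rho>^j) \<le> 1 / (1 - \<rho>)"
proof -
  have "(\<Sum>j<J. \<rho>^j) = (\<rho>^J - 1) / (\<rho> - 1)" using assms by (simp add: geometric_sum)
  also have "\<dots> = (1 - \<rho>^J) / (1 - \<rho>)" by (metis minus_diff_eq minus_divide_divide)
  also have "\<dots> \<le> 1 / (1 - \<rho>)" using assms by (intro divide_right_mono) auto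
  finally show ?thesis .
qed

lemma geo2_eq: fixes \<rho> :: real
  shows "(1 - \<rho>)^2 * (\<Sum>j<J. real j * \<rho>^j) = \<rho> - real J * \<rho>^J + (real J - 1) * \<rho>^(J+1)"
proof (induction J)
  case 0 then show ?case by simp
next
  case (Suc J)
  have "(1 - \<rho>)^2 * (\<Sum>j<Suc J. real j * \<rho>^j) = (1 - \<rho>)^2 * (\<Sum>j<J. real j * \<rho>^j) + (1 - \<rho>)^2 * (real J * \<rho>^J)"
    by (simp add: algebra_simps)
  also have "\<dots> = \<rho> - real (Suc J) * \<rho>^(Suc J) + (real (Suc J) - 1) * \<rho>^(Suc J+1)"
    using Suc by (simp add: power2_eq_square algebra_simps)
  finally show ?case .
qed

lemma geo2: fixes \<rho> :: real assumes "0 \<le> \<rho>" "\<rho> < 1" shows "(\<Sum>j<J. real j * \<rho>^j) \<le> 1 / (1 - \<rho>)^2"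
proof -
  have "\<rho>^J * ((real J - 1) * \<rho>) \<le> \<rho>^J * real J"
  proof (rule mult_left_mono)
    show "(real J - 1) * \<rho> \<le> real J"
    proof (cases "J = 0")
      case True then show ?thesis using assms by simp
    next
      case False
      then have "0 \<le> real J - 1" by simp
      then have "(real J - 1) * \<rho> \<le> (real J - 1) * 1" using assms by (intro mult_left_mono) auto
      then show ?thesis by simp
    qed
  qed (use assms in simp)
  then have "(1 - \<rho>)^2 * (\<Sum>j<J. real j * \<rho>^j) \<le> 1"
    unfolding geo2_eq using assms by (simp add: algebra_simps)
  moreover have "0 < (1 - \<rho>)^2" using assms by simp
  ultimately show ?thesis by (simp add: field_simps)
qed

lemma geo3: fixes \<rho> :: real assumes "0 \<le> \<rho>" "\<rho> < 1"
  shows "(\<Sum>j<J. (real j + 2) * \<rho>^j) \<le> 1 / (1 - \<rho>)^2 + 2 / (1 - \<rho>)"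
proof -
  have "(\<Sum>j<J. (real j + 2) * \<rho>^j) = (\<Sum>j<J. real j * \<rho>^j) + 2 * (\<Sum>j<J. \<rho>^j)"
    by (simp add: algebra_simps sum.distrib sum_distrib_left)
  also have "\<dots> \<le> 1 / (1 - \<rho>)^2 + 2 * (1 / (1 - \<rho>))"
    using geo1[OF assms] geo2[OF assms] by (intro add_mono mult_left_mono) auto
  finally show ?thesis by simp
qed

lemma group_bound:
  fixes h g :: "nat \<Rightarrow> real"
  assumes "\<And>k. h k \<le> g (k div B)" "0 < B"
  shows "(\<Sum>k<J * B. h k) \<le> real B * (\<Sum>j<J. g j)"
proof -
  have "(\<Sum>k<J * B. h k) = (\<Sum>j<J. \<Sum>k\<in>{j * B..<j * B + B}. h k)" by (rule sum.nat_group[symmetric])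
  also have "\<dots> \<le> (\<Sum>j<J. \<Sum>k\<in>{j * B..<j * B + B}. g j)"
  proof (intro sum_mono)
    fix j k assume "k \<in> {j * B..<j * B + B}"
    then have "k div B = j" using assms(2) by (auto intro: div_nat_eqI simp: algebra_simps)
    then show "h k \<le> g j" using assms(1)[of k] by simp
  qed
  also have "\<dots> = real B * (\<Sum>j<J. g j)" by (simp add: sum_distrib_left)
  finally show ?thesis .
qed




context lg begin

lemma Max_pk_le_pt: "Max ((\<lambda>v. pk V E W t v v) ` V) \<le> Max ((\<lambda>v. pt V E t v v) ` V)"
proof -
  have "\<forall>x\<in>(\<lambda>v. pk V E W t v v) ` V. x \<le> Max ((\<lambda>v. pt V E t v v) ` V)"
  proof
    fix x assume "x \<in> (\<lambda>v. pk V E W t v v) ` V"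
    then obtain v where v: "v \<in> V" "x = pk V E W t v v" by blast
    have "pt V E t v v \<le> Max ((\<lambda>v. pt V E t v v) ` V)" using finV v by simp
    then show "x \<le> Max ((\<lambda>v. pt V E t v v) ` V)" using v pk_le_pt order_trans by blast
  qed
  then show ?thesis using finV V_ne by simp
qed

lemma Max_pk_nonneg: "0 \<le> Max ((\<lambda>v. pk V E W t v v) ` V)"
proof -
  obtain v where v: "v \<in> V" using V_ne by blast
  have "pk V E W t v v \<le> Max ((\<lambda>v. pk V E W t v v) ` V)" using finV v by simp
  then show ?thesis using pk_nonneg order_trans by blast
qed

lemma partial_bound:
  assumes r: "0 < r" and D: "real (max_deg V E) / real (min_deg V E) \<le> D"
    and capp: "0 < Cap V E r W"
  shows "(\<Sum>t<K. real (t+1) * Max ((\<lambda>v. pk V E W t v v) ` V))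
     \<le> bubble V E + (3/2 * D / real (card V)) * real (tmix V E + r)^2
         * (1 / (Cap V E r W / 2)^2 + 2 / (Cap V E r W / 2))"
proof -
  define T where "T = tmix V E"
  define B where "B = T + r"
  define \<rho> where "\<rho> = rho W r"
  define c where "c = 3/2 * D / real (card V)"
  define f where "f t = real (t+1) * Max ((\<lambda>v. pk V E W t v v) ` V)" for t
  define h where "h k = real (k + T + 1) * c * \<rho> ^ (k div B)" for k
  define g where "g j = (real j + 2) * real B * c * \<rho> ^ j" for j
  have B: "0 < B" using r B_def by simp
  have TB: "T + 1 \<le> B" using r B_def by simp
  have rho0: "0 \<le> \<rho>" using rho_nonneg[OF r] \<rho>_def by simp
  have rho1: "\<rho> < 1" using capp unfolding \<rho>_def rho_def by simp
  have q: "1 - \<rho> = Cap V E r W / 2" unfolding \<rho>_def rho_def by simp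
  obtain v0 where v0: "v0 \<in> V" using V_ne by blast
  have Dn: "0 \<le> D / real (card V)" using stat_le[OF D v0] stat_nonneg order_trans by blast
  then have c0: "0 \<le> c" unfolding c_def by simp
  have f0: "0 \<le> f t" for t unfolding f_def using Max_pk_nonneg by simp
  have h0: "0 \<le> h k" for k unfolding h_def using c0 rho0 by simp
  have fT: "f (k + T) \<le> h k" for k
  proof -
    have "Max ((\<lambda>v. pk V E W (k + T) v v) ` V) \<le> c * \<rho> ^ (k div B)"
    proof -
      have "\<forall>x\<in>(\<lambda>v. pk V E W (k + T) v v) ` V. x \<le> c * \<rho> ^ (k div B)"
      proof
        fix x assume "x \<in> (\<lambda>v. pk V E W (k + T) v v) ` V"
        then obtain v where v: "v \<in> V" "x = pk V E W (k + T) v v" by blast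
        have "x \<le> 3/2 * stat V E v * A W k v" using diag_bound[OF v(1)] v(2) T_def by simp
        also have "\<dots> \<le> 3/2 * (D / real (card V)) * \<rho> ^ (k div B)"
          using stat_le[OF D v(1)] decay[OF r v(1), of W k] A_nonneg[of W k v] stat_nonneg[of v] Dn
          unfolding \<rho>_def B_def T_def by (intro mult_mono) auto
        finally show "x \<le> c * \<rho> ^ (k div B)" unfolding c_def by simp
      qed
      then show ?thesis using finV V_ne by simp
    qed
    then have "f (k + T) \<le> real (k + T + 1) * (c * \<rho> ^ (k div B))"
      unfolding f_def by (intro mult_left_mono) auto
    then show ?thesis unfolding h_def by (simp add: mult.assoc)
  qed
  have hg: "h k \<le> g (k div B)" for k
  proof -
    have "k < (k div B + 1) * B" using B by (metis add.commute div_mult_mod_eq mod_less_divisor mult_Suc nat_add_left_cancel_less plus_1_eq_Suc)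
    then have "k + T + 1 \<le> (k div B + 2) * B" using TB by simp
    then have "real (k + T + 1) \<le> (real (k div B) + 2) * real B"
      by (metis of_nat_add of_nat_le_iff of_nat_mult numeral_plus_one of_nat_numeral)
    then show ?thesis unfolding h_def g_def using c0 rho0
      by (intro mult_right_mono) (auto simp: mult.assoc)
  qed
  have split: "(\<Sum>t<T + 1 + K. f t) = (\<Sum>t<T + 1. f t) + (\<Sum>k<K. f (T + 1 + k))" for K
    by (induction K) (auto simp: add.assoc[symmetric])
  have "(\<Sum>t<K. f t) \<le> (\<Sum>t<T + 1 + K. f t)"
    by (rule sum_mono2) (auto simp: f0)
  also have "\<dots> = (\<Sum>t<T + 1. f t) + (\<Sum>k<K. f (T + 1 + k))" by (rule split)
  also have "(\<Sum>t<T + 1. f t) \<le> bubble V E"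
  proof -
    have "(\<Sum>t<T + 1. f t) \<le> (\<Sum>t<T + 1. real (t+1) * Max ((\<lambda>v. pt V E t v v) ` V))"
      unfolding f_def by (rule sum_mono) (intro mult_left_mono Max_pk_le_pt, simp)
    also have "\<dots> = bubble V E" unfolding bubble_def T_def
      by (simp add: atLeast0AtMost lessThan_Suc_atMost)
    finally show ?thesis .
  qed
  also have "(\<Sum>k<K. f (T + 1 + k)) \<le> (\<Sum>k<K. h (Suc k))"
  proof (rule sum_mono)
    fix k have "T + 1 + k = Suc k + T" by simp
    then show "f (T + 1 + k) \<le> h (Suc k)" using fT[of "Suc k"] by (simp only:)
  qed
  also have "\<dots> \<le> (\<Sum>k<Suc K. h k)" unfolding sum.lessThan_Suc_shift using h0[of 0] by linarith
  also have "\<dots> \<le> (\<Sum>k<Suc K * B. h k)"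
  proof (rule sum_mono2)
    have "Suc K * 1 \<le> Suc K * B" by (rule mult_le_mono2) (use B in simp)
    then show "{..<Suc K} \<subseteq> {..<Suc K * B}" by auto
  qed (use h0 in auto)
  also have "\<dots> \<le> real B * (\<Sum>j<Suc K. g j)" by (rule group_bound[of h g B, OF hg B])
  also have "\<dots> = real B * (real B * c) * (\<Sum>j<Suc K. (real j + 2) * \<rho> ^ j)"
    unfolding g_def by (simp add: sum_distrib_left algebra_simps)
  also have "\<dots> \<le> real B * (real B * c) * (1 / (1 - \<rho>)^2 + 2 / (1 - \<rho>))"
    using geo3[OF rho0 rho1, of "Suc K"] c0 by (intro mult_left_mono) (simp_all del: sum.lessThan_Suc)
  finally have fin: "(\<Sum>t<K. f t) \<le> bubble V E + real B * (real B * c) * (1 / (1 - \<rho>)^2 + 2 / (1 - \<rho>))" by simp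
  note fin2 = fin[unfolded q f_def c_def B_def T_def]
  have eq: "real (tmix V E + r) * (real (tmix V E + r) * (3 / 2 * D / real (card V))) = 3 / 2 * D / real (card V) * (real (tmix V E + r))\<^sup>2"
    by (simp add: power2_eq_square)
  show ?thesis using fin2 unfolding eq .
qed

end



lemma final_arith:
  fixes D n r T cap ch :: real
  assumes D: "0 < D" and n: "0 < n" and r: "0 < r" and T: "0 \<le> T" "T \<le> r" and chi: "0 < ch"
    and cap: "ch * r / sqrt n \<le> cap" and rs: "r \<le> sqrt n / 12"
  shows "3/2 * D / n * (T + r)^2 * (1 / (cap/2)^2 + 2 / (cap/2)) \<le> 2 * D + 36 * D / ch^2"
proof -
  define s where "s = sqrt n"
  have s: "0 < s" using n s_def by simp
  have ns: "n = s^2" using n s_def by simp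
  define k where "k = ch * r / s"
  have k: "0 < k" using chi r s k_def by simp
  have kc: "k \<le> cap" using cap k_def s_def by simp
  have c1: "1 / (cap/2)^2 \<le> 4 / k^2"
  proof -
    have "k^2 \<le> cap^2" using k kc by (intro power_mono) auto
    moreover have "0 < cap" using k kc by simp
    ultimately have "1 / cap^2 \<le> 1 / k^2" using k by (intro divide_left_mono) auto
    then show ?thesis by (simp add: power2_eq_square field_simps)
  qed
  have c2: "2 / (cap/2) \<le> 4 / k"
  proof -
    have "1 / cap \<le> 1 / k" using k kc by (intro divide_left_mono) auto
    then show ?thesis by (simp add: field_simps)
  qed
  have Tr: "(T + r)^2 \<le> 4 * r^2"
  proof -
    have "(T + r)^2 \<le> (2 * r)^2" using T r by (intro power_mono) auto
    then show ?thesis by (simp add: power2_eq_square)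
  qed
  have cpos: "0 \<le> 3/2 * D / n" using D n by simp
  have "3/2 * D / n * (T + r)^2 * (1 / (cap/2)^2 + 2 / (cap/2)) \<le> 3/2 * D / n * (4 * r^2) * (4 / k^2 + 4 / k)"
  proof (rule mult_mono)
    show "3/2 * D / n * (T + r)^2 \<le> 3/2 * D / n * (4 * r^2)" using Tr cpos by (rule mult_left_mono)
    show "1 / (cap/2)^2 + 2 / (cap/2) \<le> 4 / k^2 + 4 / k" using c1 c2 by (rule add_mono)
    show "0 \<le> 3/2 * D / n * (4 * r^2)" using D n by simp
    have "0 < cap" using k kc by simp
    then show "0 \<le> 1 / (cap/2)^2 + 2 / (cap/2)" by simp
  qed
  also have "\<dots> = 24 * D / ch^2 + 24 * D * (r / s) / ch"
    unfolding ns k_def using s r chi by (simp add: field_simps power2_eq_square)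
  also have "24 * D * (r / s) / ch \<le> 2 * D / ch"
  proof -
    have "r / s \<le> 1/12" using rs s s_def by (simp add: field_simps)
    then have "24 * D * (r / s) \<le> 24 * D * (1/12)" using D by (intro mult_left_mono) auto
    then have "24 * D * (r / s) / ch \<le> 24 * D * (1/12) / ch" by (rule divide_right_mono) (use chi in simp)
    then show ?thesis by simp
  qed
  also have "2 * D / ch \<le> 2 * D + 12 * D / ch^2"
  proof (cases "1 \<le> ch")
    case True
    then have "2 * D / ch \<le> 2 * D" using D chi by (simp add: field_simps)
    moreover have "0 \<le> 12 * D / ch^2" using D by simp
    ultimately show ?thesis by linarith
  next
    case False
    then have "ch^2 \<le> ch" using chi by (simp add: power2_eq_square mult_le_cancel_right1)
    then have "2 * D / ch \<le> 2 * D / ch^2" using D chi by (intro divide_left_mono) auto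
    also have "\<dots> \<le> 12 * D / ch^2" using D chi by (intro divide_right_mono) auto
    finally show ?thesis using D by linarith
  qed
  finally show ?thesis by simp
qed




theorem mainTheorem20:
  fixes D \<alpha> \<theta> :: real
  assumes "D > 0" and "\<alpha> > 0" and "\<theta> > 0"
  shows "\<exists>N::nat. \<forall>(V::nat set) (E::nat \<Rightarrow> nat \<Rightarrow> bool).
     simple_graph V E \<and> connected_graph V E \<and> card V \<ge> N
     \<and> real (max_deg V E) / real (min_deg V E) \<le> D
     \<and> real (tmix V E) \<le> real (card V) powr (1/2 - \<alpha>)
     \<and> bubble V E \<le> \<theta>
     \<longrightarrow> (\<forall>chi::real. \<forall>W. chi > 0 \<and> W \<subseteq> V \<and> W \<noteq> {}
            \<and> Cap V E (run_time (card V) \<alpha>) W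
                \<ge> chi * real (run_time (card V) \<alpha>) / sqrt (real (card V))
          \<longrightarrow> bubbleW V E W \<le> ennreal (\<theta> + 2 * D + 36 * D / chi\<^sup>2))"
proof -
  have Dp: "D > 0" and ap: "\<alpha> > 0" using assms by auto
  define e where "e = 1/2 - \<alpha>/3"
  define N0 where "N0 = (24::real) powr (3/\<alpha>)"
  define N where "N = max 576 (nat \<lceil>N0\<rceil>)"
  show ?thesis
  proof (intro exI[of _ N] allI impI)
    fix V :: "nat set" and E :: "nat \<Rightarrow> nat \<Rightarrow> bool" and chi :: real and W :: "nat set"
    assume H: "simple_graph V E \<and> connected_graph V E \<and> card V \<ge> N
     \<and> real (max_deg V E) / real (min_deg V E) \<le> D
     \<and> real (tmix V E) \<le> real (card V) powr (1/2 - \<alpha>)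
     \<and> bubble V E \<le> \<theta>"
    assume HW: "chi > 0 \<and> W \<subseteq> V \<and> W \<noteq> {}
            \<and> Cap V E (run_time (card V) \<alpha>) W
                \<ge> chi * real (run_time (card V) \<alpha>) / sqrt (real (card V))"
    define n where "n = card V"
    define r where "r = run_time (card V) \<alpha>"
    define T where "T = tmix V E"
    have sg: "simple_graph V E" and conn: "connected_graph V E" and nN: "N \<le> n"
      and Dh: "real (max_deg V E) / real (min_deg V E) \<le> D"
      and Th: "real T \<le> real n powr (1/2 - \<alpha>)" and bub: "bubble V E \<le> \<theta>"
      using H unfolding n_def T_def by auto
    have chi: "0 < chi" and capr: "chi * real r / sqrt (real n) \<le> Cap V E r W"
      using HW unfolding r_def n_def by auto
    have n576: "576 \<le> n" using nN unfolding N_def by simp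
    have nN0: "N0 \<le> real n"
    proof -
      have "nat \<lceil>N0\<rceil> \<le> n" using nN unfolding N_def by simp
      then have "real (nat \<lceil>N0\<rceil>) \<le> real n" by simp
      moreover have "N0 \<le> real (nat \<lceil>N0\<rceil>)" by linarith
      ultimately show ?thesis by linarith
    qed
    have two: "2 \<le> card V" using n576 n_def by simp
    interpret lg V E using sg conn two by unfold_locales
    have T1: "1 \<le> real T" using tmix_pos T_def by simp
    have n1: "1 < real n" using n576 by simp
    have ea: "0 \<le> 1/2 - \<alpha>"
    proof (rule ccontr)
      assume "\<not> 0 \<le> 1/2 - \<alpha>"
      then have "real n powr (1/2 - \<alpha>) < 1" using n1 by (intro powr_less_one) auto
      then show False using T1 Th by simp
    qed
    have Te: "real T \<le> real n powr e"
    proof -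
      have "real n powr (1/2 - \<alpha>) \<le> real n powr e" unfolding e_def using ap n1 by (intro powr_mono) auto
      then show ?thesis using Th by simp
    qed
    have rdef: "r = nat (round (real n powr e))" unfolding r_def run_time_def n_def e_def by simp
    have Tr: "T \<le> r"
    proof -
      have "int T \<le> \<lfloor>real n powr e\<rfloor>" using Te by (simp add: le_floor_iff)
      also have "\<dots> \<le> round (real n powr e)" by (rule floor_le_round)
      finally show ?thesis unfolding rdef by simp
    qed
    have r1: "1 \<le> r" using T1 Tr by simp
    have rle: "real r \<le> real n powr e + 1/2"
    proof -
      have "0 \<le> round (real n powr e)" using r1 rdef by simp
      then have "real r = of_int (round (real n powr e))" unfolding rdef by simp
      also have "\<dots> \<le> real n powr e + 1/2" by (rule of_int_round_le)
      finally show ?thesis .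
    qed
    have npe: "real n powr e = sqrt (real n) * real n powr (- \<alpha>/3)"
    proof -
      have "real n powr e = real n powr (1/2 + (- \<alpha>/3))" unfolding e_def by simp
      also have "\<dots> = real n powr (1/2) * real n powr (- \<alpha>/3)" by (rule powr_add)
      finally show ?thesis using powr_half_sqrt[of "real n"] by simp
    qed
    have small: "real n powr (- \<alpha>/3) \<le> 1/24"
    proof -
      have N0p: "0 < N0" unfolding N0_def by simp
      have "real n powr (- \<alpha>/3) \<le> N0 powr (- \<alpha>/3)" using ap N0p nN0 by (intro powr_mono2') auto
      also have "N0 powr (- \<alpha>/3) = 24 powr ((3/\<alpha>) * (- \<alpha>/3))" unfolding N0_def by (rule powr_powr)
      also have "(3/\<alpha>) * (- \<alpha>/3) = -1" using ap by simp
      finally show ?thesis by simp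
    qed
    have sq: "24 \<le> sqrt (real n)"
    proof -
      have "(24::real)^2 \<le> real n" using n576 by simp
      then have "sqrt ((24::real)^2) \<le> sqrt (real n)" by (rule real_sqrt_le_mono)
      then show ?thesis by simp
    qed
    have rs: "real r \<le> sqrt (real n) / 12"
    proof -
      have "real n powr e \<le> sqrt (real n) * (1/24)" unfolding npe using small by (intro mult_left_mono) auto
      then show ?thesis using rle sq by simp
    qed
    have capp: "0 < Cap V E r W"
    proof -
      have "0 < chi * real r / sqrt (real n)" using chi r1 n1 by simp
      then show ?thesis using capr by simp
    qed
    have fin: "3/2 * D / real n * (real T + real r)^2 * (1 / (Cap V E r W / 2)^2 + 2 / (Cap V E r W / 2))
               \<le> 2 * D + 36 * D / chi^2"
      by (rule final_arith) (use Dp n1 r1 Tr chi capr rs in auto)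
    define f where "f t = real (t+1) * Max ((\<lambda>v. pk V E W t v v) ` V)" for t
    have f0: "0 \<le> f t" for t unfolding f_def using Max_pk_nonneg by simp
    have fb: "(\<Sum>t<K. f t) \<le> \<theta> + 2 * D + 36 * D / chi^2" for K
    proof -
      have "(\<Sum>t<K. f t) \<le> bubble V E + (3/2 * D / real (card V)) * real (tmix V E + r)^2
         * (1 / (Cap V E r W / 2)^2 + 2 / (Cap V E r W / 2))"
        unfolding f_def using partial_bound[OF _ Dh capp] r1 by simp
      also have "\<dots> = bubble V E + 3/2 * D / real n * (real T + real r)^2 * (1 / (Cap V E r W / 2)^2 + 2 / (Cap V E r W / 2))"
        unfolding n_def T_def by simp
      finally show ?thesis using fin bub by simp
    qed
    have summ: "summable f" by (rule summableI_nonneg_bounded[OF f0 fb])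
    have "bubbleW V E W = (\<Sum>t. ennreal (f t))" unfolding bubbleW_def f_def by simp
    also have "\<dots> = ennreal (\<Sum>t. f t)" by (rule suminf_ennreal2[OF f0 summ])
    also have "\<dots> \<le> ennreal (\<theta> + 2 * D + 36 * D / chi^2)"
      by (rule ennreal_leI) (rule suminf_le_const[OF summ fb])
    finally show "bubbleW V E W \<le> ennreal (\<theta> + 2 * D + 36 * D / chi\<^sup>2)" .
  qed
qed



end
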